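(* For any $1\le d\le n$ and $\mathcal{F}$ being any one of the four classes (1) all, (2) homogeneous, (3) $d$-homogeneous, (4) degree at most $d$, we have \[ \mathrm{qBr}_n(\mathcal{F}^q_n)\le \mathrm{Br}_n(\mathcal{F}_n)\qquad\text{and}\qquad \mathrm{Br}_{3n}(\mathcal{F}_{3n})\le 3\,\mathrm{qBr}_n(\mathcal{F}^q_n). \]
   Context: Every $f:\{-1,1\}^m\to\mathbb{C}$ expands as $f=\sum_{S\subset[m]}\widehat f(S)\chi_S$ with $\chi_S(x)=\prod_{j\in S}x_j$. $f$ is of degree $d$ if $\widehat f(S)=0$ for $|S|>d$, $d$-homogeneous if $\widehat f(S)=0$ for $|S|\ne d$, and homogeneous if it is $d$-homogeneous for some $d$. The Boolean radius $\mathrm{Br}_m(f)$ is the positive real number $r$ with $\sum_{S\subset[m]}|\widehat f(S)|r^{|S|}=\|f\|_\infty$, and for a class $\mathcal{F}$ of functions $\mathrm{Br}_m(\mathcal{F})=\inf\{\mathrm{Br}_m(f):f\in\mathcal{F}\}$. The classes of functions on $\{-1,1\}^m$: $\mathcal{F}_m(\mathrm{all})$ all functions, $\mathcal{F}_m(\mathrm{hom})$ all homogeneous functions, $\mathcal{F}_m(=d)$ all $d$-homogeneous functions, $\mathcal{F}_m(\le d)$ all functions of degree at most $d$. Quantum setting: with Pauli matrices $\sigma_0=I_2$, $\sigma_1=\begin{pmatrix}0&1\\1&0\end{pmatrix}$, $\sigma_2=\begin{pmatrix}0&-i\\ i&0\end{pmatrix}$, $\sigma_3=\begin{pmatrix}1&0\\0&-1\end{pmatrix}$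 and $\sigma_{\mathbf{s}}=\sigma_{s_1}\otimes\cdots\otimes\sigma_{s_n}$ for $\mathbf{s}\in\{0,1,2,3\}^n$, every $A\in M_2(\mathbb{C})^{\otimes n}$ expands uniquely as $A=\sum_{\mathbf{s}}\widehat A_{\mathbf{s}}\sigma_{\mathbf{s}}$; $|\mathbf{s}|$ is the number of nonzero entries. Degree $d$, $d$-homogeneous and homogeneous are defined analogously using $|\mathbf{s}|$. The quantum Boolean radius $\mathrm{qBr}_n(A)$ is the positive real $r$ with $\sum_{\mathbf{s}}|\widehat A_{\mathbf{s}}|r^{|\mathbf{s}|}=\|A\|$ (operator norm), and $\mathrm{qBr}_n(\mathcal{F}')=\inf\{\mathrm{qBr}_n(A):A\in\mathcal{F}'\}$. For each class $\mathcal{F}_n$ above, $\mathcal{F}^q_n$ denotes the corresponding class of matrices in $M_2(\mathbb{C})^{\otimes n}$ (all, homogeneous, $d$-homogeneous, degree at most $d$). *)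

theory Defs
  imports Complex_Main "HOL-Library.FuncSet"
begin

definition cube :: "nat \<Rightarrow> (nat \<Rightarrow> real) set" where
  "cube m = {..<m} \<rightarrow>\<^sub>E {-1, 1}"

definition chi :: "nat set \<Rightarrow> (nat \<Rightarrow> real) \<Rightarrow> complex" where
  "chi S x = complex_of_real (\<Prod>j\<in>S. x j)"

definition fourier :: "nat \<Rightarrow> ((nat \<Rightarrow> real) \<Rightarrow> complex) \<Rightarrow> nat set \<Rightarrow> complex" where
  "fourier m f S = (\<Sum>x\<in>cube m. f x * chi S x) / 2 ^ m"

definition supnorm :: "nat \<Rightarrow> ((nat \<Rightarrow> real) \<Rightarrow> complex) \<Rightarrow> real" where
  "supnorm m f = Max ((\<lambda>x. cmod (f x)) ` cube m)"

definition br_sum :: "nat \<Rightarrow> ((nat \<Rightarrow> real) \<Rightarrow> complex) \<Rightarrow> real \<Rightarrow> real" where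
  "br_sum m f r = (\<Sum>S\<in>Pow {..<m}. cmod (fourier m f S) * r ^ card S)"

definition has_Br :: "nat \<Rightarrow> ((nat \<Rightarrow> real) \<Rightarrow> complex) \<Rightarrow> bool" where
  "has_Br m f = (\<exists>!r. r > 0 \<and> br_sum m f r = supnorm m f)"

definition Br :: "nat \<Rightarrow> ((nat \<Rightarrow> real) \<Rightarrow> complex) \<Rightarrow> real" where
  "Br m f = (THE r. r > 0 \<and> br_sum m f r = supnorm m f)"

definition Br_class :: "nat \<Rightarrow> ((nat \<Rightarrow> real) \<Rightarrow> complex) set \<Rightarrow> real" where
  "Br_class m F = Inf (Br m ` {f \<in> F. has_Br m f})"

definition deg_le :: "nat \<Rightarrow> nat \<Rightarrow> ((nat \<Rightarrow> real) \<Rightarrow> complex) \<Rightarrow> bool" where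
  "deg_le m d f = (\<forall>S\<in>Pow {..<m}. card S > d \<longrightarrow> fourier m f S = 0)"

definition hom_eq :: "nat \<Rightarrow> nat \<Rightarrow> ((nat \<Rightarrow> real) \<Rightarrow> complex) \<Rightarrow> bool" where
  "hom_eq m d f = (\<forall>S\<in>Pow {..<m}. card S \<noteq> d \<longrightarrow> fourier m f S = 0)"

datatype fclass = All | Hom | HomEq nat | DegLe nat

fun classical_class :: "nat \<Rightarrow> fclass \<Rightarrow> ((nat \<Rightarrow> real) \<Rightarrow> complex) set" where
  "classical_class m All = UNIV"
| "classical_class m Hom = {f. \<exists>d. hom_eq m d f}"
| "classical_class m (HomEq d) = {f. hom_eq m d f}"
| "classical_class m (DegLe d) = {f. deg_le m d f}"

text \<open>A matrix in M_2(C)^{tensor n} is a 2^n x 2^n complex matrix, represented by its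
  entries A i j for i, j < 2^n (the Kronecker ordering: tensor factor k corresponds to
  bit n-1-k of the index).\<close>
type_synonym cmat = "nat \<Rightarrow> nat \<Rightarrow> complex"

fun pauli :: "nat \<Rightarrow> cmat" where
  "pauli 0 i j = (if i = j then 1 else 0)"
| "pauli (Suc 0) i j = (if i \<noteq> j then 1 else 0)"
| "pauli (Suc (Suc 0)) i j = (if i = 0 \<and> j = 1 then - \<i> else if i = 1 \<and> j = 0 then \<i> else 0)"
| "pauli (Suc (Suc (Suc _))) i j = (if i = j then (if i = 0 then 1 else -1) else 0)"

definition bitk :: "nat \<Rightarrow> nat \<Rightarrow> nat \<Rightarrow> nat" where
  "bitk n k i = i div 2 ^ (n - 1 - k) mod 2"

definition pauli_tensor :: "nat \<Rightarrow> (nat \<Rightarrow> nat) \<Rightarrow> cmat" where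
  "pauli_tensor n s i j = (\<Prod>k<n. pauli (s k) (bitk n k i) (bitk n k j))"

definition pauli_idx :: "nat \<Rightarrow> (nat \<Rightarrow> nat) set" where
  "pauli_idx n = {..<n} \<rightarrow>\<^sub>E {0..3}"

definition weight :: "nat \<Rightarrow> (nat \<Rightarrow> nat) \<Rightarrow> nat" where
  "weight n s = card {k \<in> {..<n}. s k \<noteq> 0}"

definition pauli_coeff :: "nat \<Rightarrow> cmat \<Rightarrow> (nat \<Rightarrow> nat) \<Rightarrow> complex" where
  "pauli_coeff n A s =
     (\<Sum>i<2^n. \<Sum>j<2^n. pauli_tensor n s i j * A j i) / 2 ^ n"

definition vnorm :: "nat \<Rightarrow> (nat \<Rightarrow> complex) \<Rightarrow> real" where
  "vnorm N x = sqrt (\<Sum>i<N. (cmod (x i))\<^sup>2)"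

definition opnorm :: "nat \<Rightarrow> cmat \<Rightarrow> real" where
  "opnorm n A = Sup {vnorm (2^n) (\<lambda>i. \<Sum>j<2^n. A i j * x j) | x. vnorm (2^n) x \<le> 1}"

definition qbr_sum :: "nat \<Rightarrow> cmat \<Rightarrow> real \<Rightarrow> real" where
  "qbr_sum n A r = (\<Sum>s\<in>pauli_idx n. cmod (pauli_coeff n A s) * r ^ weight n s)"

definition has_qBr :: "nat \<Rightarrow> cmat \<Rightarrow> bool" where
  "has_qBr n A = (\<exists>!r. r > 0 \<and> qbr_sum n A r = opnorm n A)"

definition qBr :: "nat \<Rightarrow> cmat \<Rightarrow> real" where
  "qBr n A = (THE r. r > 0 \<and> qbr_sum n A r = opnorm n A)"

definition qBr_class :: "nat \<Rightarrow> cmat set \<Rightarrow> real" where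
  "qBr_class n F = Inf (qBr n ` {A \<in> F. has_qBr n A})"

definition qdeg_le :: "nat \<Rightarrow> nat \<Rightarrow> cmat \<Rightarrow> bool" where
  "qdeg_le n d A = (\<forall>s\<in>pauli_idx n. weight n s > d \<longrightarrow> pauli_coeff n A s = 0)"

definition qhom_eq :: "nat \<Rightarrow> nat \<Rightarrow> cmat \<Rightarrow> bool" where
  "qhom_eq n d A = (\<forall>s\<in>pauli_idx n. weight n s \<noteq> d \<longrightarrow> pauli_coeff n A s = 0)"

fun quantum_class :: "nat \<Rightarrow> fclass \<Rightarrow> cmat set" where
  "quantum_class n All = UNIV"
| "quantum_class n Hom = {A. \<exists>d. qhom_eq n d A}"
| "quantum_class n (HomEq d) = {A. qhom_eq n d A}"
| "quantum_class n (DegLe d) = {A. qdeg_le n d A}"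

end

theory Submission
  imports Defs "HOL-Analysis.L2_Norm"
begin


lemma finite_cube[simp]: "finite (cube m)"
  unfolding cube_def by (simp add: finite_PiE)

lemma cube_ne[simp]: "cube m \<noteq> {}"
  unfolding cube_def by (simp add: PiE_eq_empty_iff)

lemma card_cube: "card (cube m) = 2 ^ m"
  unfolding cube_def by (simp add: card_PiE numeral_2_eq_2)

lemma cube_val: "x \<in> cube m \<Longrightarrow> j < m \<Longrightarrow> x j = -1 \<or> x j = 1"
  unfolding cube_def by (auto simp: PiE_iff)

lemma sum_cube_prod:
  "(\<Sum>x\<in>cube m. \<Prod>j<m. F j (x j)) = (\<Prod>j<m. F j (-1) + F j (1::real)) "
  for F :: "nat \<Rightarrow> real \<Rightarrow> 'c::comm_semiring_1"
proof -
  have "(\<Prod>j<m. \<Sum>y\<in>{-1,1::real}. F j y) = (\<Sum>x\<in>cube m. \<Prod>j<m. F j (x j))"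
    unfolding cube_def by (rule prod_sum_PiE) auto
  then show ?thesis by simp
qed

lemma chi_prod: "S \<subseteq> {..<m} \<Longrightarrow> chi S x = (\<Prod>j<m. (if j \<in> S then complex_of_real (x j) else 1))"
  unfolding chi_def
  by (simp add: prod.If_cases Int_absorb1 flip: of_real_prod)

lemma sum_chi: assumes "S \<subseteq> {..<m}"
  shows "(\<Sum>x\<in>cube m. chi S x) = (if S = {} then 2 ^ m else 0)"
proof -
  have "(\<Sum>x\<in>cube m. chi S x) = (\<Prod>j<m. (if j \<in> S then complex_of_real (-1) else 1) + (if j \<in> S then complex_of_real 1 else 1))"
    using assms by (simp add: chi_prod sum_cube_prod[where F="\<lambda>j y. if j \<in> S then complex_of_real y else 1"])
  also have "\<dots> = (if S = {} then 2 ^ m else 0)"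
  proof (cases "S = {}")
    case True then show ?thesis by simp
  next
    case False
    then obtain j where "j \<in> S" by auto
    with assms have "j \<in> {..<m}" by auto
    then show ?thesis using False \<open>j \<in> S\<close> by (subst prod_zero) auto
  qed
  finally show ?thesis .
qed

lemma chi_mult: assumes "x \<in> cube m" "S \<subseteq> {..<m}" "T \<subseteq> {..<m}"
  shows "chi S x * chi T x = chi ((S - T) \<union> (T - S)) x"
proof -
  have sq: "j \<in> S \<inter> T \<Longrightarrow> x j * x j = 1" for j using cube_val[OF assms(1)] assms(2) by fastforce
  have "chi S x * chi T x = (\<Prod>j<m. (if j \<in> S then complex_of_real (x j) else 1) * (if j \<in> T then complex_of_real (x j) else 1))"
    using assms by (simp add: chi_prod prod.distrib)
  also have "\<dots> = (\<Prod>j<m. (if j \<in> (S - T) \<union> (T - S) then complex_of_real (x j) else 1))"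
    apply (rule prod.cong, simp)
    using sq by (auto simp flip: of_real_mult)
  also have "\<dots> = chi ((S - T) \<union> (T - S)) x" using assms by (subst chi_prod[of _ m]) auto
  finally show ?thesis .
qed

lemma chi_orth: assumes "S \<subseteq> {..<m}" "T \<subseteq> {..<m}"
  shows "(\<Sum>x\<in>cube m. chi S x * chi T x) = (if S = T then 2 ^ m else 0)"
proof -
  have "(\<Sum>x\<in>cube m. chi S x * chi T x) = (\<Sum>x\<in>cube m. chi ((S - T) \<union> (T - S)) x)"
    using assms by (intro sum.cong) (auto simp: chi_mult)
  also have "\<dots> = (if S = T then 2 ^ m else 0)"
    using assms by (subst sum_chi) auto
  finally show ?thesis .
qed

lemma fourier_expansion:
  assumes "finite I" "\<And>s. s \<in> I \<Longrightarrow> \<phi> s \<subseteq> {..<m}" "T \<subseteq> {..<m}"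
  shows "fourier m (\<lambda>x. \<Sum>s\<in>I. c s * chi (\<phi> s) x) T = (\<Sum>s\<in>I. if \<phi> s = T then c s else 0)"
proof -
  have "fourier m (\<lambda>x. \<Sum>s\<in>I. c s * chi (\<phi> s) x) T
     = (\<Sum>s\<in>I. c s * (\<Sum>x\<in>cube m. chi (\<phi> s) x * chi T x)) / 2 ^ m"
    unfolding fourier_def
    by (simp add: sum_distrib_right sum_distrib_left mult.assoc sum.swap[of _ I])
  also have "\<dots> = (\<Sum>s\<in>I. if \<phi> s = T then c s else 0)"
    using assms by (auto simp add: chi_orth sum_divide_distrib intro!: sum.cong)
  finally show ?thesis .
qed



lemma var_identity:
  fixes a :: "'x \<Rightarrow> real"
  assumes "finite X" "card X > 0"
  shows "(\<Sum>x\<in>X. (a x - (\<Sum>y\<in>X. a y) / card X)\<^sup>2) = (\<Sum>x\<in>X. (a x)\<^sup>2) - card X * ((\<Sum>y\<in>X. a y) / card X)\<^sup>2"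
proof -
  define \<mu> where "\<mu> = (\<Sum>y\<in>X. a y) / card X"
  have s: "(\<Sum>y\<in>X. a y) = card X * \<mu>" using assms unfolding \<mu>_def by simp
  have "(\<Sum>x\<in>X. (a x - \<mu>)\<^sup>2) = (\<Sum>x\<in>X. (a x)\<^sup>2) - 2 * \<mu> * (\<Sum>y\<in>X. a y) + card X * \<mu>\<^sup>2"
    by (simp add: power2_diff sum.distrib sum_subtractf sum_distrib_left sum_distrib_right algebra_simps)
  then show ?thesis unfolding \<mu>_def[symmetric] s by (simp add: power2_eq_square)
qed

lemma cmod_sq: "(cmod z)\<^sup>2 = (Re z)\<^sup>2 + (Im z)\<^sup>2"
  by (simp add: cmod_def)

lemma supnorm_ge: "x \<in> cube m \<Longrightarrow> cmod (f x) \<le> supnorm m f"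
  unfolding supnorm_def by (rule Max_ge) auto

lemma supnorm_nonneg: "0 \<le> supnorm m f"
proof -
  obtain x where "x \<in> cube m" using cube_ne by blast
  then show ?thesis using supnorm_ge[of x m f] norm_ge_zero order_trans by blast
qed

lemma fourier_empty_lt:
  assumes S0: "S0 \<subseteq> {..<m}" "S0 \<noteq> {}" "fourier m f S0 \<noteq> 0"
  shows "cmod (fourier m f {}) < supnorm m f"
proof -
  define N where "N = card (cube m)"
  have N: "N = 2 ^ m" "N > 0" unfolding N_def by (auto simp: card_cube)
  define c0 where "c0 = fourier m f {}"
  have c0: "c0 = (\<Sum>x\<in>cube m. f x) / N" unfolding c0_def fourier_def chi_def N by simp
  have reC: "Re c0 = (\<Sum>x\<in>cube m. Re (f x)) / card (cube m)" using c0 unfolding N_def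
    by (simp add: Re_divide_of_nat Re_sum)
  have imC: "Im c0 = (\<Sum>x\<in>cube m. Im (f x)) / card (cube m)" using c0 unfolding N_def
    by (simp add: Im_divide_of_nat Im_sum)
  have key: "(\<Sum>x\<in>cube m. (cmod (f x - c0))\<^sup>2) = (\<Sum>x\<in>cube m. (cmod (f x))\<^sup>2) - N * (cmod c0)\<^sup>2"
  proof -
    have "(\<Sum>x\<in>cube m. (cmod (f x - c0))\<^sup>2) = (\<Sum>x\<in>cube m. (Re (f x) - Re c0)\<^sup>2) + (\<Sum>x\<in>cube m. (Im (f x) - Im c0)\<^sup>2)"
      by (simp add: cmod_sq sum.distrib)
    also have "\<dots> = ((\<Sum>x\<in>cube m. (Re (f x))\<^sup>2) - N * (Re c0)\<^sup>2) + ((\<Sum>x\<in>cube m. (Im (f x))\<^sup>2) - N * (Im c0)\<^sup>2)"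
      unfolding reC imC N_def using var_identity[of "cube m" "\<lambda>x. Re (f x)"] var_identity[of "cube m" "\<lambda>x. Im (f x)"] N
      unfolding N_def by simp
    also have "\<dots> = (\<Sum>x\<in>cube m. (cmod (f x))\<^sup>2) - N * (cmod c0)\<^sup>2"
      by (simp add: cmod_sq sum.distrib algebra_simps)
    finally show ?thesis .
  qed
  have pos: "(\<Sum>x\<in>cube m. (cmod (f x - c0))\<^sup>2) > 0"
  proof (rule ccontr)
    assume "\<not> ?thesis"
    then have "(\<Sum>x\<in>cube m. (cmod (f x - c0))\<^sup>2) = 0"
      by (meson sum_nonneg zero_le_power2 order.antisym not_less)
    then have "\<forall>x\<in>cube m. (cmod (f x - c0))\<^sup>2 = 0"
      by (subst sum_nonneg_eq_0_iff[symmetric]) auto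
    then have fc: "\<forall>x\<in>cube m. f x = c0" by auto
    have "fourier m f S0 = (\<Sum>x\<in>cube m. c0 * chi S0 x) / 2 ^ m"
      unfolding fourier_def using fc by (intro arg_cong2[where f="(/)"] sum.cong) auto
    also have "\<dots> = 0" using S0 by (simp add: sum_distrib_left[symmetric] sum_chi)
    finally show False using S0 by simp
  qed
  have "(\<Sum>x\<in>cube m. (cmod (f x))\<^sup>2) \<le> (\<Sum>x\<in>cube m. (supnorm m f)\<^sup>2)"
    by (intro sum_mono power_mono supnorm_ge) auto
  also have "\<dots> = N * (supnorm m f)\<^sup>2" unfolding N_def by simp
  finally have "N * (cmod c0)\<^sup>2 < N * (supnorm m f)\<^sup>2" using key pos by linarith
  then have "(cmod c0)\<^sup>2 < (supnorm m f)\<^sup>2" using N by simp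
  then show ?thesis unfolding c0_def using supnorm_nonneg
    by (meson power_less_imp_less_base)
qed

lemma br_sum_0: "br_sum m f 0 = cmod (fourier m f {})"
proof -
  have "br_sum m f 0 = (\<Sum>S\<in>Pow {..<m}. if S = {} then cmod (fourier m f S) else 0)"
    unfolding br_sum_def by (intro sum.cong) (auto simp: card_eq_0_iff finite_subset)
  also have "\<dots> = cmod (fourier m f {})" by (simp add: sum.delta)
  finally show ?thesis .
qed

lemma br_sum_strict_mono:
  assumes S0: "S0 \<subseteq> {..<m}" "S0 \<noteq> {}" "fourier m f S0 \<noteq> 0" and r: "0 \<le> r" "r < r'"
  shows "br_sum m f r < br_sum m f r'"
  unfolding br_sum_def
proof (rule sum_strict_mono_ex1)
  show "finite (Pow {..<m})" by simp
  show "\<forall>S\<in>Pow {..<m}. cmod (fourier m f S) * r ^ card S \<le> cmod (fourier m f S) * r' ^ card S"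
    using r by (auto intro!: mult_left_mono power_mono)
  have "card S0 > 0" using S0 by (metis card_gt_0_iff finite_lessThan finite_subset)
  then have "r ^ card S0 < r' ^ card S0" using r by (simp add: power_strict_mono)
  then show "\<exists>S\<in>Pow {..<m}. cmod (fourier m f S) * r ^ card S < cmod (fourier m f S) * r' ^ card S"
    using S0 by (intro bexI[of _ S0]) auto
qed

lemma br_key:
  assumes S0: "S0 \<subseteq> {..<m}" "S0 \<noteq> {}" "fourier m f S0 \<noteq> 0"
    and R: "R > 0" "supnorm m f \<le> br_sum m f R"
  shows "has_Br m f \<and> Br m f \<le> R"
proof -
  have cont: "continuous_on {0..R} (br_sum m f)"
    unfolding br_sum_def by (intro continuous_intros)
  have "br_sum m f 0 \<le> supnorm m f" using fourier_empty_lt[OF S0] br_sum_0 by simp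
  from IVT'[of "br_sum m f" 0 "supnorm m f" R, OF this R(2) _ cont] R
  obtain r where r: "0 \<le> r" "r \<le> R" "br_sum m f r = supnorm m f" by auto
  have "r \<noteq> 0" using r fourier_empty_lt[OF S0] br_sum_0 by auto
  with r have r0: "r > 0" by simp
  have uniq: "r' = r" if "r' > 0" "br_sum m f r' = supnorm m f" for r'
  proof (rule ccontr)
    assume "r' \<noteq> r"
    then consider "r' < r" | "r < r'" by linarith
    then show False
      using br_sum_strict_mono[OF S0, of r' r] br_sum_strict_mono[OF S0, of r r'] that r r0 by auto
  qed
  have ex: "\<exists>!r. r > 0 \<and> br_sum m f r = supnorm m f"
    using r r0 uniq by blast
  have "Br m f = r" unfolding Br_def
    by (rule the1_equality[OF ex]) (use r r0 in auto)
  then show ?thesis using ex r unfolding has_Br_def by simp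
qed



lemma bits_inj_aux:
  "a < 2 ^ n \<Longrightarrow> b < 2 ^ n \<Longrightarrow> (\<forall>p<n. (a::nat) div 2 ^ p mod 2 = b div 2 ^ p mod 2) \<Longrightarrow> a = b"
proof (induction n arbitrary: a b)
  case 0 then show ?case by simp
next
  case (Suc n)
  have "a div 2 = b div 2"
  proof (rule Suc.IH)
    show "a div 2 < 2 ^ n" "b div 2 < 2 ^ n" using Suc.prems by auto
    show "\<forall>p<n. a div 2 div 2 ^ p mod 2 = b div 2 div 2 ^ p mod 2"
    proof (intro allI impI)
      fix p assume "p < n"
      then have "a div 2 ^ Suc p mod 2 = b div 2 ^ Suc p mod 2" using Suc.prems(3)[rule_format, of "Suc p"] by simp
      then show "a div 2 div 2 ^ p mod 2 = b div 2 div 2 ^ p mod 2" by (simp add: div_mult2_eq)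
    qed
  qed
  moreover have "a mod 2 = b mod 2" using Suc.prems(3)[rule_format, of 0] by simp
  ultimately show ?case by (metis div_mult_mod_eq)
qed

lemma bitk_inj:
  assumes "a < 2 ^ n" "b < 2 ^ n" "\<forall>k<n. bitk n k a = bitk n k b"
  shows "a = b"
proof (rule bits_inj_aux[OF assms(1,2)], intro allI impI)
  fix p assume p: "p < n"
  then have "n - 1 - (n - 1 - p) = p" "n - 1 - p < n" by auto
  then show "a div 2 ^ p mod 2 = b div 2 ^ p mod 2"
    using assms(3) unfolding bitk_def by metis
qed

lemma bitk_lt: "bitk n k i < 2" unfolding bitk_def by simp

lemma bitk_01: "bitk n k i = 0 \<or> bitk n k i = 1" unfolding bitk_def by auto

definition bitsv :: "nat \<Rightarrow> nat \<Rightarrow> nat \<Rightarrow> nat" where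
  "bitsv n i = (\<lambda>k\<in>{..<n}. bitk n k i)"

lemma bitsv_bij: "bij_betw (bitsv n) {..<2^n} ({..<n} \<rightarrow>\<^sub>E {0,1})"
proof -
  have inj: "inj_on (bitsv n) {..<2^n}"
  proof (rule inj_onI)
    fix a b assume ab: "a \<in> {..<2^n}" "b \<in> {..<2^n}" "bitsv n a = bitsv n b"
    have "\<forall>k<n. bitk n k a = bitk n k b"
    proof (intro allI impI)
      fix k assume "k < n"
      then show "bitk n k a = bitk n k b" using fun_cong[OF ab(3), of k] by (simp add: bitsv_def)
    qed
    then show "a = b" using ab bitk_inj by auto
  qed
  have sub: "bitsv n ` {..<2^n} \<subseteq> {..<n} \<rightarrow>\<^sub>E {0,1}"
  proof (rule image_subsetI)
    fix i show "bitsv n i \<in> {..<n} \<rightarrow>\<^sub>E {0,1}" unfolding bitsv_def restrict_PiE_iff using bitk_01 by blast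
  qed
  have "card (bitsv n ` {..<2^n}) = card ({..<n} \<rightarrow>\<^sub>E {0::nat,1})"
    using inj by (simp add: card_image card_PiE numeral_2_eq_2)
  then have "bitsv n ` {..<2^n} = {..<n} \<rightarrow>\<^sub>E {0,1}"
    using sub by (intro card_subset_eq) (auto simp: finite_PiE)
  then show ?thesis using inj by (simp add: bij_betw_def)
qed

lemma sum_bits_prod:
  fixes h :: "nat \<Rightarrow> nat \<Rightarrow> 'c::comm_semiring_1"
  shows "(\<Sum>i<2^n. \<Prod>k<n. h k (bitk n k i)) = (\<Prod>k<n. h k 0 + h k 1)"
proof -
  have "(\<Sum>i<2^n. \<Prod>k<n. h k (bitk n k i)) = (\<Sum>i<2^n. \<Prod>k<n. h k (bitsv n i k))"
    by (intro sum.cong prod.cong) (auto simp: bitsv_def)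
  also have "\<dots> = (\<Sum>b\<in>{..<n} \<rightarrow>\<^sub>E {0,1}. \<Prod>k<n. h k (b k))"
    using sum.reindex_bij_betw[OF bitsv_bij, of "\<lambda>b. \<Prod>k<n. h k (b k)"] by simp
  also have "\<dots> = (\<Prod>k<n. \<Sum>\<beta>\<in>{0,1}. h k \<beta>)"
    by (rule prod_sum_PiE[symmetric]) auto
  also have "\<dots> = (\<Prod>k<n. h k 0 + h k 1)" by simp
  finally show ?thesis .
qed

definition pt :: "nat \<Rightarrow> nat \<Rightarrow> nat \<Rightarrow> real" where
  "pt n i = (\<lambda>k\<in>{..<n}. if bitk n k i = 0 then 1 else -1)"

lemma pt_bij: "bij_betw (pt n) {..<2^n} (cube n)"
proof -
  have inj: "inj_on (pt n) {..<2^n}"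
  proof (rule inj_onI)
    fix a b assume ab: "a \<in> {..<2^n}" "b \<in> {..<2^n}" "pt n a = pt n b"
    have "\<forall>k<n. bitk n k a = bitk n k b"
    proof (intro allI impI)
      fix k assume "k < n"
      then show "bitk n k a = bitk n k b" using fun_cong[OF ab(3), of k] bitk_01[of n k a] bitk_01[of n k b]
        by (auto simp: pt_def split: if_splits)
    qed
    then show "a = b" using ab bitk_inj by auto
  qed
  have sub: "pt n ` {..<2^n} \<subseteq> cube n"
  proof (rule image_subsetI)
    fix i show "pt n i \<in> cube n" unfolding pt_def cube_def restrict_PiE_iff by simp
  qed
  have "card (pt n ` {..<2^n}) = card (cube n)"
    using inj by (simp add: card_image card_cube)
  then have "pt n ` {..<2^n} = cube n"
    using sub by (intro card_subset_eq) auto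
  then show ?thesis using inj by (simp add: bij_betw_def)
qed



lemma vnorm_L2: "vnorm N x = L2_set (\<lambda>i. cmod (x i)) {..<N}"
  unfolding vnorm_def L2_set_def by simp

lemma vnorm_nonneg: "0 \<le> vnorm N x" unfolding vnorm_L2 by simp

lemma vnorm_le_sum: "vnorm N x \<le> (\<Sum>i<N. cmod (x i))"
  unfolding vnorm_L2 by (rule L2_set_le_sum) auto

lemma comp_le_vnorm: "j < N \<Longrightarrow> cmod (x j) \<le> vnorm N x"
  unfolding vnorm_L2 by (rule member_le_L2_set) auto

definition opset :: "nat \<Rightarrow> cmat \<Rightarrow> real set" where
  "opset n A = {vnorm (2^n) (\<lambda>i. \<Sum>j<2^n. A i j * x j) | x. vnorm (2^n) x \<le> 1}"

lemma opnorm_opset: "opnorm n A = Sup (opset n A)"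
  unfolding opnorm_def opset_def ..

lemma opset_bdd: "bdd_above (opset n A)"
proof (rule bdd_aboveI)
  fix y assume "y \<in> opset n A"
  then obtain x where x: "vnorm (2^n) x \<le> 1" "y = vnorm (2^n) (\<lambda>i. \<Sum>j<2^n. A i j * x j)"
    unfolding opset_def by auto
  have "y \<le> (\<Sum>i<2^n. cmod (\<Sum>j<2^n. A i j * x j))" using x(2) vnorm_le_sum by simp
  also have "\<dots> \<le> (\<Sum>i<(2::nat)^n. \<Sum>j<(2::nat)^n. cmod (A i j))"
  proof (intro sum_mono)
    fix i
    have "cmod (\<Sum>j<2^n. A i j * x j) \<le> (\<Sum>j<2^n. cmod (A i j * x j))" by (rule norm_sum)
    also have "\<dots> \<le> (\<Sum>j<(2::nat)^n. cmod (A i j))"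
    proof (intro sum_mono)
      fix j assume "j \<in> {..<(2::nat)^n}"
      then have "cmod (x j) \<le> 1" using comp_le_vnorm[of j "2^n" x] x(1) by auto
      then show "cmod (A i j * x j) \<le> cmod (A i j)"
        by (simp add: norm_mult mult_left_le)
    qed
    finally show "cmod (\<Sum>j<2^n. A i j * x j) \<le> (\<Sum>j<(2::nat)^n. cmod (A i j))" .
  qed
  finally show "y \<le> (\<Sum>i<(2::nat)^n. \<Sum>j<(2::nat)^n. cmod (A i j))" .
qed

lemma opnorm_ge: "vnorm (2^n) x \<le> 1 \<Longrightarrow> vnorm (2^n) (\<lambda>i. \<Sum>j<2^n. A i j * x j) \<le> opnorm n A"
  unfolding opnorm_opset by (rule cSup_upper[OF _ opset_bdd]) (auto simp: opset_def)

lemma quad_bound: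
  assumes "vnorm (2^n) \<psi> = 1"
  shows "cmod (\<Sum>j<2^n. cnj (\<psi> j) * (\<Sum>i<2^n. A j i * \<psi> i)) \<le> opnorm n A"
proof -
  let ?y = "\<lambda>j. \<Sum>i<2^n. A j i * \<psi> i"
  have "cmod (\<Sum>j<2^n. cnj (\<psi> j) * ?y j) \<le> (\<Sum>j<2^n. \<bar>cmod (\<psi> j)\<bar> * \<bar>cmod (?y j)\<bar>)"
    by (rule order_trans[OF norm_sum]) (simp add: norm_mult)
  also have "\<dots> \<le> L2_set (\<lambda>j. cmod (\<psi> j)) {..<2^n} * L2_set (\<lambda>j. cmod (?y j)) {..<2^n}"
    by (rule L2_set_mult_ineq)
  also have "\<dots> = vnorm (2^n) ?y" using assms unfolding vnorm_L2 by simp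
  also have "\<dots> \<le> opnorm n A" using assms by (intro opnorm_ge) simp
  finally show ?thesis .
qed

lemma sq_if: "(cmod (if c then a else 0))\<^sup>2 = (if c then (cmod a)\<^sup>2 else 0)" by simp

definition diagm :: "nat \<Rightarrow> ((nat \<Rightarrow> real) \<Rightarrow> complex) \<Rightarrow> cmat" where
  "diagm n f i j = (if i = j then f (pt n i) else 0)"

lemma pt_cube: "i < 2^n \<Longrightarrow> pt n i \<in> cube n"
  using pt_bij by (auto simp: bij_betw_def)

lemma opnorm_diagm: "opnorm n (diagm n f) = supnorm n f"
proof (rule antisym)
  let ?M = "supnorm n f"
  show "opnorm n (diagm n f) \<le> ?M"
    unfolding opnorm_opset
  proof (rule cSup_least)
    show "opset n (diagm n f) \<noteq> {}" unfolding opset_def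
      by (auto intro!: exI[of _ "\<lambda>_. 0"] simp: vnorm_def)
    fix y assume "y \<in> opset n (diagm n f)"
    then obtain x where x: "vnorm (2^n) x \<le> 1" "y = vnorm (2^n) (\<lambda>i. \<Sum>j<2^n. diagm n f i j * x j)"
      unfolding opset_def by auto
    have dx: "(\<Sum>j<2^n. diagm n f i j * x j) = f (pt n i) * x i" if "i < 2^n" for i
    proof -
      have "(\<Sum>j<2^n. diagm n f i j * x j) = (\<Sum>j<2^n. if i = j then f (pt n i) * x i else 0)"
        by (intro sum.cong) (auto simp: diagm_def)
      then show ?thesis using that by simp
    qed
    have "y\<^sup>2 = (\<Sum>i<2^n. (cmod (f (pt n i) * x i))\<^sup>2)"
      using x(2) dx unfolding vnorm_def by (simp add: sum_nonneg)
    also have "\<dots> \<le> (\<Sum>i<2^n. ?M\<^sup>2 * (cmod (x i))\<^sup>2)"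
      by (intro sum_mono) (auto simp: norm_mult power_mult_distrib intro!: mult_right_mono power_mono supnorm_ge pt_cube)
    also have "\<dots> = ?M\<^sup>2 * (vnorm (2^n) x)\<^sup>2" unfolding vnorm_def by (simp add: sum_distrib_left sum_nonneg)
    also have "\<dots> \<le> ?M\<^sup>2 * 1"
      using x(1) vnorm_nonneg[of "2^n" x] by (intro mult_left_mono) (auto simp: power_le_one)
    finally have "y\<^sup>2 \<le> ?M\<^sup>2" by simp
    then show "y \<le> ?M" using supnorm_nonneg by (meson power2_le_imp_le)
  qed
  obtain x0 where x0: "x0 \<in> cube n" "cmod (f x0) = ?M"
  proof -
    have "?M \<in> (\<lambda>x. cmod (f x)) ` cube n" unfolding supnorm_def by (rule Max_in) auto
    then show ?thesis using that by auto
  qed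
  moreover have "pt n ` {..<2^n} = cube n" using pt_bij[of n] by (simp add: bij_betw_def)
  ultimately obtain i0 where i0: "i0 < 2^n" "pt n i0 = x0" by (metis imageE lessThan_iff)
  let ?e = "\<lambda>j. if j = i0 then (1::complex) else 0"
  have ve: "vnorm (2^n) ?e = 1" unfolding vnorm_def using i0
    by (simp only: sq_if sum.delta) simp
  have de: "(\<lambda>i. \<Sum>j<2^n. diagm n f i j * ?e j) = (\<lambda>i. if i = i0 then f x0 else 0)"
  proof
    fix i
    have "(\<Sum>j<2^n. diagm n f i j * ?e j) = (\<Sum>j<2^n. if j = i0 then (if i = i0 then f x0 else 0) else 0)"
      using i0 by (intro sum.cong) (auto simp: diagm_def)
    then show "(\<Sum>j<2^n. diagm n f i j * ?e j) = (if i = i0 then f x0 else 0)" using i0 by simp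
  qed
  have "vnorm (2^n) (\<lambda>i. if i = i0 then f x0 else 0) = ?M" unfolding vnorm_def using i0 x0 supnorm_nonneg[of n f]
    by (simp only: sq_if sum.delta) simp
  then show "?M \<le> opnorm n (diagm n f)" using opnorm_ge[of n ?e "diagm n f"] ve de by simp
qed



lemma pauli0[simp]: "pauli 0 a b = (if a = b then 1 else 0)" by simp
lemma pauli1[simp]: "pauli 1 a b = (if a \<noteq> b then 1 else 0)" by (simp add: One_nat_def)
lemma pauli2[simp]: "pauli 2 a b = (if a = 0 \<and> b = 1 then - \<i> else if a = 1 \<and> b = 0 then \<i> else 0)"
  by (simp add: numeral_2_eq_2)
lemma pauli3[simp]: "pauli 3 a b = (if a = b then (if a = 0 then 1 else -1) else 0)"
  by (simp add: numeral_3_eq_3)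

definition Zset :: "nat \<Rightarrow> (nat \<Rightarrow> nat) set" where
  "Zset n = {s \<in> pauli_idx n. \<forall>k<n. s k = 0 \<or> s k = 3}"

definition supp3 :: "nat \<Rightarrow> (nat \<Rightarrow> nat) \<Rightarrow> nat set" where
  "supp3 n s = {k \<in> {..<n}. s k = 3}"

definition s3 :: "nat \<Rightarrow> nat set \<Rightarrow> nat \<Rightarrow> nat" where
  "s3 n S = (\<lambda>k\<in>{..<n}. if k \<in> S then 3 else 0)"

lemma finite_pauli_idx[simp]: "finite (pauli_idx n)"
  unfolding pauli_idx_def by (simp add: finite_PiE)

lemma pauli_idx_val: "s \<in> pauli_idx n \<Longrightarrow> k < n \<Longrightarrow> s k \<in> {0,1,2,3}"
proof -
  assume "s \<in> pauli_idx n" "k < n"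
  then have "s k \<in> {0..3}" unfolding pauli_idx_def by (auto simp: PiE_iff)
  then show "s k \<in> {0,1,2,3}" by auto
qed

lemma pauli_idx_ext: "s \<in> pauli_idx n \<Longrightarrow> \<not> k < n \<Longrightarrow> s k = undefined"
  unfolding pauli_idx_def by (auto simp: PiE_iff extensional_def)

lemma tensor_diag:
  assumes s: "s \<in> pauli_idx n"
  shows "pauli_tensor n s i i = (if s \<in> Zset n then chi (supp3 n s) (pt n i) else 0)"
proof (cases "s \<in> Zset n")
  case True
  have "pauli_tensor n s i i = (\<Prod>k<n. if k \<in> supp3 n s then complex_of_real (pt n i k) else 1)"
    unfolding pauli_tensor_def
  proof (intro prod.cong refl)
    fix k assume k: "k \<in> {..<n}"
    then have "s k = 0 \<or> s k = 3" using True by (auto simp: Zset_def)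
    then show "pauli (s k) (bitk n k i) (bitk n k i) = (if k \<in> supp3 n s then complex_of_real (pt n i k) else 1)"
      using k by (auto simp: supp3_def pt_def)
  qed
  also have "\<dots> = chi (supp3 n s) (pt n i)" by (subst chi_prod[of _ n]) (auto simp: supp3_def)
  finally show ?thesis using True by simp
next
  case False
  then obtain k where k: "k < n" "s k \<noteq> 0" "s k \<noteq> 3" using s by (auto simp: Zset_def)
  then have k: "k < n" "s k = 1 \<or> s k = 2" using pauli_idx_val[OF s k(1)] by auto
  have "pauli (s k) (bitk n k i) (bitk n k i) = 0" using k by auto
  then have "pauli_tensor n s i i = 0" unfolding pauli_tensor_def using k by (intro prod_zero) auto
  then show ?thesis using False by simp
qed

lemma coef_diag:
  assumes s: "s \<in> pauli_idx n"
  shows "pauli_coeff n (diagm n f) s = (if s \<in> Zset n then fourier n f (supp3 n s) else 0)"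
proof -
  have "pauli_coeff n (diagm n f) s = (\<Sum>i<2^n. pauli_tensor n s i i * f (pt n i)) / 2^n"
  proof -
    have "(\<Sum>j<2^n. pauli_tensor n s i j * diagm n f j i) = pauli_tensor n s i i * f (pt n i)" if "i < 2^n" for i
    proof -
      have "(\<Sum>j<2^n. pauli_tensor n s i j * diagm n f j i) = (\<Sum>j<2^n. if j = i then pauli_tensor n s i i * f (pt n i) else 0)"
        by (intro sum.cong) (auto simp: diagm_def)
      then show ?thesis using that by simp
    qed
    then show ?thesis unfolding pauli_coeff_def by simp
  qed
  also have "\<dots> = (if s \<in> Zset n then (\<Sum>i<2^n. f (pt n i) * chi (supp3 n s) (pt n i)) / 2^n else 0)"
    using s by (simp add: tensor_diag mult.commute)
  also have "\<dots> = (if s \<in> Zset n then fourier n f (supp3 n s) else 0)"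
    unfolding fourier_def using sum.reindex_bij_betw[OF pt_bij, of "\<lambda>x. f x * chi (supp3 n s) x" n] by simp
  finally show ?thesis .
qed

lemma weight_Z: "s \<in> Zset n \<Longrightarrow> weight n s = card (supp3 n s)"
  unfolding weight_def supp3_def Zset_def by (rule arg_cong[where f=card]) auto

lemma supp3_sub: "supp3 n s \<subseteq> {..<n}" unfolding supp3_def by auto

lemma s3_Z: "S \<subseteq> {..<n} \<Longrightarrow> s3 n S \<in> Zset n"
  unfolding s3_def Zset_def pauli_idx_def by (auto simp: restrict_PiE_iff)

lemma supp3_s3: "S \<subseteq> {..<n} \<Longrightarrow> supp3 n (s3 n S) = S"
  unfolding s3_def supp3_def by auto

lemma s3_supp3: "s \<in> Zset n \<Longrightarrow> s3 n (supp3 n s) = s"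
proof
  fix k assume s: "s \<in> Zset n"
  show "s3 n (supp3 n s) k = s k"
  proof (cases "k < n")
    case True then show ?thesis using s by (auto simp: s3_def supp3_def Zset_def)
  next
    case False
    then have "s k = undefined" using s pauli_idx_ext by (auto simp: Zset_def)
    then show ?thesis using False by (simp add: s3_def)
  qed
qed

lemma s3_bij: "bij_betw (s3 n) (Pow {..<n}) (Zset n)"
proof (rule bij_betw_byWitness[where f'="supp3 n"])
  show "\<forall>a\<in>Pow {..<n}. supp3 n (s3 n a) = a" using supp3_s3 by auto
  show "\<forall>a'\<in>Zset n. s3 n (supp3 n a') = a'" using s3_supp3 by auto
  show "s3 n ` Pow {..<n} \<subseteq> Zset n" using s3_Z by auto
  show "supp3 n ` Zset n \<subseteq> Pow {..<n}" using supp3_sub by auto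
qed

lemma qbr_sum_diag: "qbr_sum n (diagm n f) r = br_sum n f r"
proof -
  have "qbr_sum n (diagm n f) r = (\<Sum>s\<in>Zset n. cmod (fourier n f (supp3 n s)) * r ^ card (supp3 n s))"
    unfolding qbr_sum_def
    by (rule sum.mono_neutral_cong_right) (auto simp: Zset_def coef_diag weight_Z)
  also have "\<dots> = (\<Sum>S\<in>Pow {..<n}. cmod (fourier n f (supp3 n (s3 n S))) * r ^ card (supp3 n (s3 n S)))"
    by (rule sum.reindex_bij_betw[OF s3_bij, symmetric])
  also have "\<dots> = br_sum n f r" unfolding br_sum_def by (intro sum.cong) (auto simp: supp3_s3)
  finally show ?thesis .
qed

lemma diag_has: "has_qBr n (diagm n f) = has_Br n f"
  unfolding has_qBr_def has_Br_def qbr_sum_diag opnorm_diagm ..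

lemma diag_qBr: "qBr n (diagm n f) = Br n f"
  unfolding qBr_def Br_def qbr_sum_diag opnorm_diagm ..

lemma diag_hom: "hom_eq n d f \<Longrightarrow> qhom_eq n d (diagm n f)"
  unfolding hom_eq_def qhom_eq_def
  by (auto simp: coef_diag weight_Z supp3_sub)

lemma diag_deg: "deg_le n d f \<Longrightarrow> qdeg_le n d (diagm n f)"
  unfolding deg_le_def qdeg_le_def
  by (auto simp: coef_diag weight_Z supp3_sub)



definition hh :: complex where "hh = complex_of_real (sqrt 2 / 2)"

lemma hh_sq: "hh * cnj hh = 1/2"
proof -
  have "sqrt 2 / 2 * (sqrt 2 / 2) = (1/2::real)" by (simp add: field_simps)
  then show ?thesis unfolding hh_def by (metis complex_cnj_complex_of_real of_real_divide of_real_mult of_real_numeral of_real_1)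
qed

definition vv :: "nat \<Rightarrow> real \<Rightarrow> nat \<Rightarrow> complex" where
  "vv \<tau> y \<beta> = (if \<tau> = 3 then (if \<beta> = 0 then complex_of_real ((1+y)/2) else complex_of_real ((1-y)/2))
     else if \<tau> = 1 then (if \<beta> = 0 then hh else complex_of_real y * hh)
     else (if \<beta> = 0 then hh else \<i> * complex_of_real y * hh))"

lemma sum_0_3: "(\<Sum>t\<in>{0..3::nat}. F t) = F 0 + F 1 + F 2 + F 3"
  by (simp add: numeral_3_eq_3 numeral_2_eq_2 atLeast0_atMost_Suc add.commute add.left_commute)

lemma sum_1_3: "(\<Sum>t\<in>{1..3::nat}. F t) = F 1 + F 2 + F 3"
proof -
  have "{1..3::nat} = {1,2,3}" by auto
  then show ?thesis by (simp add: add.assoc)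
qed

lemma qubit:
  assumes ab: "\<alpha> \<in> {0,1}" "\<beta> \<in> {0,1}" and Y: "Y 1 \<in> {-1,1}" "Y 2 \<in> {-1,1}" "Y 3 \<in> {-1,1}"
  shows "(\<Sum>t\<in>{0..3}. pauli t \<alpha> \<beta> * (if t = 0 then 1 else complex_of_real (Y t) / 3))
       = 2/3 * (\<Sum>\<tau>\<in>{1..3}. vv \<tau> (Y \<tau>) \<alpha> * cnj (vv \<tau> (Y \<tau>) \<beta>))"
proof -
  have h: "hh * cnj hh = 1/2" by (rule hh_sq)
  have hr: "cnj hh = hh" unfolding hh_def by simp
  have h2: "hh * hh = 1/2" using h hr by simp
  have i0: "Im hh = 0" unfolding hh_def by simp
  have r2: "Re hh * Re hh = 1/2" using arg_cong[OF h2, of Re] i0 by simp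
  show ?thesis
    unfolding sum_0_3 sum_1_3 vv_def using ab Y
    by (auto simp: hr h2 algebra_simps) (simp_all add: complex_eq_iff i0 r2 mult.assoc[symmetric])
qed



lemma vv_norm:
  assumes "\<tau> \<in> {1,2,3}" "y \<in> {-1,1}"
  shows "(cmod (vv \<tau> y 0))\<^sup>2 + (cmod (vv \<tau> y 1))\<^sup>2 = 1"
proof -
  have i0: "Im hh = 0" unfolding hh_def by simp
  have hr: "cnj hh = hh" unfolding hh_def by simp
  have h2: "hh * hh = 1/2" using hh_sq hr by simp
  have r2: "Re hh * Re hh = 1/2" using arg_cong[OF h2, of Re] i0 by simp
  have c: "(cmod hh)\<^sup>2 = 1/2" unfolding cmod_sq using r2 i0 by (simp add: power2_eq_square)
  show ?thesis using assms unfolding vv_def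
    by (auto simp: norm_mult c)
qed

definition liftk :: "(nat \<Rightarrow> nat) \<Rightarrow> nat \<Rightarrow> nat" where
  "liftk s k = 3 * k + s k - 1"

definition liftS :: "nat \<Rightarrow> (nat \<Rightarrow> nat) \<Rightarrow> nat set" where
  "liftS n s = liftk s ` {k \<in> {..<n}. s k \<noteq> 0}"

lemma liftk_div: "s k \<in> {1,2,3} \<Longrightarrow> liftk s k div 3 = k"
  unfolding liftk_def by auto

lemma liftk_mod: "s k \<in> {1,2,3} \<Longrightarrow> liftk s k mod 3 = s k - 1"
  unfolding liftk_def by (auto; presburger)

lemma nz_val: "s \<in> pauli_idx n \<Longrightarrow> k < n \<Longrightarrow> s k \<noteq> 0 \<Longrightarrow> s k \<in> {1,2,3}"
  using pauli_idx_val by fastforce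

lemma liftk_inj: "s \<in> pauli_idx n \<Longrightarrow> inj_on (liftk s) {k \<in> {..<n}. s k \<noteq> 0}"
  by (rule inj_onI) (metis (mono_tags, lifting) liftk_div lessThan_iff mem_Collect_eq nz_val)

lemma liftS_sub: "s \<in> pauli_idx n \<Longrightarrow> liftS n s \<subseteq> {..<3*n}"
proof
  fix i assume s: "s \<in> pauli_idx n" and "i \<in> liftS n s"
  then obtain k where k: "k < n" "s k \<noteq> 0" "i = liftk s k" unfolding liftS_def by auto
  then have "s k \<le> 3" using nz_val[OF s k(1) k(2)] by auto
  then show "i \<in> {..<3*n}" using k unfolding liftk_def by auto
qed

lemma card_liftS: "s \<in> pauli_idx n \<Longrightarrow> card (liftS n s) = weight n s"
  unfolding liftS_def weight_def by (rule card_image[OF liftk_inj])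

lemma liftS_inj: "inj_on (liftS n) (pauli_idx n)"
proof (rule inj_onI)
  fix s s' assume s: "s \<in> pauli_idx n" and s': "s' \<in> pauli_idx n" and eq: "liftS n s = liftS n s'"
  have half: "a k = b k" if a: "a \<in> pauli_idx n" "b \<in> pauli_idx n" "liftS n a = liftS n b"
      "k < n" "a k \<noteq> 0" for a b k
  proof -
    have "liftk a k \<in> liftS n b" using a unfolding liftS_def[of n a, symmetric] by (auto simp: liftS_def)
    then obtain k' where k': "k' < n" "b k' \<noteq> 0" "liftk a k = liftk b k'" unfolding liftS_def by auto
    have "k = k'" using liftk_div[of a k] liftk_div[of b k'] k' nz_val a by metis
    then have "a k = b k" using liftk_mod[of a k] liftk_mod[of b k'] k' nz_val[OF a(1) a(4) a(5)] nz_val[OF a(2)] by fastforce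
    then show ?thesis by simp
  qed
  show "s = s'"
  proof
    fix k show "s k = s' k"
    proof (cases "k < n")
      case False then show ?thesis using pauli_idx_ext s s' by metis
    next
      case True
      show ?thesis
      proof (cases "s k = 0 \<and> s' k = 0")
        case True then show ?thesis by simp
      next
        case False
        then show ?thesis using half[OF s s' eq \<open>k<n\<close>] half[OF s' s eq[symmetric] \<open>k<n\<close>] by auto
      qed
    qed
  qed
qed

definition glift :: "nat \<Rightarrow> cmat \<Rightarrow> (nat \<Rightarrow> real) \<Rightarrow> complex" where
  "glift n A x = (\<Sum>s\<in>pauli_idx n. (pauli_coeff n A s / 3 ^ weight n s) * chi (liftS n s) x)"

lemma fourier_glift_gen:
  "T \<subseteq> {..<3*n} \<Longrightarrow> fourier (3*n) (glift n A) T =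
     (\<Sum>s\<in>pauli_idx n. if liftS n s = T then pauli_coeff n A s / 3 ^ weight n s else 0)"
  unfolding glift_def by (rule fourier_expansion) (auto simp: liftS_sub)

lemma fourier_glift_in:
  assumes s0: "s0 \<in> pauli_idx n"
  shows "fourier (3*n) (glift n A) (liftS n s0) = pauli_coeff n A s0 / 3 ^ weight n s0"
proof -
  have "fourier (3*n) (glift n A) (liftS n s0) =
     (\<Sum>s\<in>pauli_idx n. if s = s0 then pauli_coeff n A s / 3 ^ weight n s else 0)"
    using s0 liftS_sub[OF s0] liftS_inj[of n] unfolding fourier_glift_gen[OF liftS_sub[OF s0]]
    by (intro sum.cong refl) (auto dest: inj_onD)
  then show ?thesis using s0 by simp
qed

lemma fourier_glift_out:
  "T \<subseteq> {..<3*n} \<Longrightarrow> T \<notin> liftS n ` pauli_idx n \<Longrightarrow> fourier (3*n) (glift n A) T = 0"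
  by (subst fourier_glift_gen) (auto intro!: sum.neutral)

lemma br_sum_glift: "br_sum (3*n) (glift n A) r = qbr_sum n A (r / 3)"
proof -
  have sub: "liftS n ` pauli_idx n \<subseteq> Pow {..<3*n}" using liftS_sub by auto
  have "br_sum (3*n) (glift n A) r = (\<Sum>T\<in>liftS n ` pauli_idx n. cmod (fourier (3*n) (glift n A) T) * r ^ card T)"
    unfolding br_sum_def
    by (rule sum.mono_neutral_right) (use sub fourier_glift_out in auto)
  also have "\<dots> = (\<Sum>s\<in>pauli_idx n. cmod (fourier (3*n) (glift n A) (liftS n s)) * r ^ card (liftS n s))"
    by (rule sum.reindex[OF liftS_inj, unfolded comp_def])
  also have "\<dots> = (\<Sum>s\<in>pauli_idx n. cmod (pauli_coeff n A s) * (r / 3) ^ weight n s)"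
    by (intro sum.cong refl) (simp add: fourier_glift_in card_liftS norm_divide power_divide norm_power)
  finally show ?thesis unfolding qbr_sum_def .
qed

lemma glift_hom: "qhom_eq n d A \<Longrightarrow> hom_eq (3*n) d (glift n A)"
  unfolding hom_eq_def
proof (intro ballI impI)
  fix T assume A: "qhom_eq n d A" and T: "T \<in> Pow {..<3*n}" "card T \<noteq> d"
  show "fourier (3*n) (glift n A) T = 0"
  proof (cases "T \<in> liftS n ` pauli_idx n")
    case True
    then obtain s where s: "s \<in> pauli_idx n" "T = liftS n s" by auto
    then show ?thesis using A T by (auto simp: fourier_glift_in card_liftS qhom_eq_def)
  next
    case False then show ?thesis using T fourier_glift_out by auto
  qed
qed

lemma glift_deg: "qdeg_le n d A \<Longrightarrow> deg_le (3*n) d (glift n A)"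
  unfolding deg_le_def
proof (intro ballI impI)
  fix T assume A: "qdeg_le n d A" and T: "T \<in> Pow {..<3*n}" "card T > d"
  show "fourier (3*n) (glift n A) T = 0"
  proof (cases "T \<in> liftS n ` pauli_idx n")
    case True
    then obtain s where s: "s \<in> pauli_idx n" "T = liftS n s" by auto
    then show ?thesis using A T by (auto simp: fourier_glift_in card_liftS qdeg_le_def)
  next
    case False then show ?thesis using T fourier_glift_out by auto
  qed
qed



lemma pauli_idx_PiE: "pauli_idx n = Pi\<^sub>E {..<n} (\<lambda>_. {0..3})"
  unfolding pauli_idx_def ..

lemma aux1: "(c::complex) * (\<Sum>a\<in>I. \<Sum>b\<in>J. A a b * p a b / N) = (\<Sum>a\<in>I. \<Sum>b\<in>J. A a b * (p a b * c) / N)"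
  unfolding sum_distrib_left by (intro sum.cong refl) (simp add: algebra_simps)

lemma aux1b: "(\<Sum>a\<in>I. \<Sum>b\<in>J. p a b * A b a / N) * (c::complex) = (\<Sum>a\<in>I. \<Sum>b\<in>J. A b a * (p a b * c) / N)"
  unfolding sum_distrib_right by (intro sum.cong refl) (simp add: algebra_simps)

lemma aux2:
  fixes A :: "nat \<Rightarrow> nat \<Rightarrow> complex"
  shows "(\<Sum>i\<in>I. \<Sum>j\<in>I. A j i * (c * (\<Sum>u\<in>U. p u i * cnj (p u j))))
   = c * (\<Sum>u\<in>U. \<Sum>j\<in>I. cnj (p u j) * (\<Sum>i\<in>I. A j i * p u i))"
proof -
  have "(\<Sum>i\<in>I. \<Sum>j\<in>I. A j i * (c * (\<Sum>u\<in>U. p u i * cnj (p u j))))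
      = c * (\<Sum>i\<in>I. \<Sum>j\<in>I. \<Sum>u\<in>U. cnj (p u j) * (A j i * p u i))"
    unfolding sum_distrib_left by (intro sum.cong refl) (simp add: algebra_simps)
  also have "(\<Sum>i\<in>I. \<Sum>j\<in>I. \<Sum>u\<in>U. cnj (p u j) * (A j i * p u i)) = (\<Sum>j\<in>I. \<Sum>i\<in>I. \<Sum>u\<in>U. cnj (p u j) * (A j i * p u i))"
    by (rule sum.swap)
  also have "\<dots> = (\<Sum>j\<in>I. \<Sum>u\<in>U. \<Sum>i\<in>I. cnj (p u j) * (A j i * p u i))"
    by (intro sum.cong refl sum.swap)
  also have "\<dots> = (\<Sum>u\<in>U. \<Sum>j\<in>I. \<Sum>i\<in>I. cnj (p u j) * (A j i * p u i))"
    by (rule sum.swap)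
  also have "\<dots> = (\<Sum>u\<in>U. \<Sum>j\<in>I. cnj (p u j) * (\<Sum>i\<in>I. A j i * p u i))"
    by (simp add: sum_distrib_left)
  finally show ?thesis .
qed

lemma aux3:
  fixes A :: "nat \<Rightarrow> nat \<Rightarrow> complex"
  shows "(\<Sum>s\<in>S. \<Sum>i\<in>I. \<Sum>j\<in>I. A j i * (t s i j * C s)) = (\<Sum>i\<in>I. \<Sum>j\<in>I. A j i * (\<Sum>s\<in>S. t s i j * C s))"
proof -
  have "(\<Sum>s\<in>S. \<Sum>i\<in>I. \<Sum>j\<in>I. A j i * (t s i j * C s)) = (\<Sum>i\<in>I. \<Sum>s\<in>S. \<Sum>j\<in>I. A j i * (t s i j * C s))"
    by (rule sum.swap)
  also have "\<dots> = (\<Sum>i\<in>I. \<Sum>j\<in>I. \<Sum>s\<in>S. A j i * (t s i j * C s))"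
    by (intro sum.cong refl sum.swap)
  finally show ?thesis by (simp add: sum_distrib_left)
qed

context
  fixes n :: nat and A :: cmat and x :: "nat \<Rightarrow> real"
  assumes x: "x \<in> cube (3*n)"
begin

definition "Yv k t = x (3 * k + t - 1)"
definition "cc k t = (if t = 0 then 1 else complex_of_real (Yv k t) / 3)"
definition "psi u i = (\<Prod>k<n. vv (u k) (Yv k (u k)) (bitk n k i))"
definition "Uset = Pi\<^sub>E {..<n} (\<lambda>_. {1..3::nat})"

lemma Yv_pm: "k < n \<Longrightarrow> t \<in> {1,2,3} \<Longrightarrow> Yv k t \<in> {-1,1}"
proof -
  assume "k < n" "t \<in> {1,2,3}"
  then have "3 * k + t - 1 < 3 * n" by auto
  then show ?thesis using cube_val[OF x] unfolding Yv_def by auto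
qed

lemma S1:
  assumes s: "s \<in> pauli_idx n"
  shows "pauli_coeff n A s / 3 ^ weight n s * chi (liftS n s) x = pauli_coeff n A s * (\<Prod>k<n. cc k (s k))"
proof -
  define K where "K = {k \<in> {..<n}. s k \<noteq> 0}"
  have "(\<Prod>k<n. cc k (s k)) = (\<Prod>k\<in>K. cc k (s k))"
    by (rule prod.mono_neutral_right) (auto simp: K_def cc_def)
  also have "\<dots> = (\<Prod>k\<in>K. complex_of_real (x (liftk s k)) / 3)"
    by (intro prod.cong refl) (auto simp: K_def cc_def Yv_def liftk_def)
  also have "\<dots> = (\<Prod>k\<in>K. complex_of_real (x (liftk s k))) / 3 ^ card K"
    by (simp add: prod_dividef)
  also have "(\<Prod>k\<in>K. complex_of_real (x (liftk s k))) = chi (liftS n s) x"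
    unfolding chi_def liftS_def K_def[symmetric]
    using prod.reindex[OF liftk_inj[OF s], of x] by (simp add: K_def of_real_prod)
  also have "card K = weight n s" unfolding K_def weight_def ..
  finally show ?thesis by simp
qed

lemma S3:
  assumes i: "i < 2^n" and j: "j < 2^n"
  shows "(\<Sum>s\<in>pauli_idx n. pauli_tensor n s i j * (\<Prod>k<n. cc k (s k)))
       = (2/3)^n * (\<Sum>u\<in>Uset. psi u i * cnj (psi u j))"
proof -
  have "(\<Sum>s\<in>pauli_idx n. pauli_tensor n s i j * (\<Prod>k<n. cc k (s k)))
      = (\<Sum>s\<in>pauli_idx n. \<Prod>k<n. pauli (s k) (bitk n k i) (bitk n k j) * cc k (s k))"
    unfolding pauli_tensor_def by (simp add: prod.distrib)
  also have "\<dots> = (\<Prod>k<n. \<Sum>t\<in>{0..3}. pauli t (bitk n k i) (bitk n k j) * cc k t)"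
    unfolding pauli_idx_PiE by (rule prod_sum_PiE[symmetric]) auto
  also have "\<dots> = (\<Prod>k<n. 2/3 * (\<Sum>\<tau>\<in>{1..3}. vv \<tau> (Yv k \<tau>) (bitk n k i) * cnj (vv \<tau> (Yv k \<tau>) (bitk n k j))))"
  proof (intro prod.cong refl)
    fix k assume k: "k \<in> {..<n}"
    show "(\<Sum>t\<in>{0..3}. pauli t (bitk n k i) (bitk n k j) * cc k t) =
      2/3 * (\<Sum>\<tau>\<in>{1..3}. vv \<tau> (Yv k \<tau>) (bitk n k i) * cnj (vv \<tau> (Yv k \<tau>) (bitk n k j)))"
      unfolding cc_def
      by (rule qubit) (use bitk_01 Yv_pm k in auto)
  qed
  also have "\<dots> = (2/3)^n * (\<Prod>k<n. \<Sum>\<tau>\<in>{1..3}. vv \<tau> (Yv k \<tau>) (bitk n k i) * cnj (vv \<tau> (Yv k \<tau>) (bitk n k j)))"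
    unfolding prod.distrib by simp
  also have "(\<Prod>k<n. \<Sum>\<tau>\<in>{1..3}. vv \<tau> (Yv k \<tau>) (bitk n k i) * cnj (vv \<tau> (Yv k \<tau>) (bitk n k j)))
      = (\<Sum>u\<in>Uset. \<Prod>k<n. vv (u k) (Yv k (u k)) (bitk n k i) * cnj (vv (u k) (Yv k (u k)) (bitk n k j)))"
    unfolding Uset_def by (rule prod_sum_PiE) auto
  also have "\<dots> = (\<Sum>u\<in>Uset. psi u i * cnj (psi u j))"
    unfolding psi_def by (simp add: prod.distrib cnj_prod)
  finally show ?thesis .
qed

lemma core_identity:
  "glift n A x = (\<Sum>u\<in>Uset. \<Sum>j<2^n. cnj (psi u j) * (\<Sum>i<2^n. A j i * psi u i)) / 3^n"
proof -
  have "glift n A x = (\<Sum>s\<in>pauli_idx n. pauli_coeff n A s * (\<Prod>k<n. cc k (s k)))"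
    unfolding glift_def by (intro sum.cong refl S1)
  also have "\<dots> = (\<Sum>s\<in>pauli_idx n. \<Sum>i<2^n. \<Sum>j<2^n. A j i * (pauli_tensor n s i j * (\<Prod>k<n. cc k (s k)))) / 2^n"
    unfolding pauli_coeff_def sum_divide_distrib
    by (intro sum.cong refl aux1b)
  also have "(\<Sum>s\<in>pauli_idx n. \<Sum>i<2^n. \<Sum>j<2^n. A j i * (pauli_tensor n s i j * (\<Prod>k<n. cc k (s k))))
     = (\<Sum>i<2^n. \<Sum>j<2^n. A j i * (\<Sum>s\<in>pauli_idx n. pauli_tensor n s i j * (\<Prod>k<n. cc k (s k))))"
    by (rule aux3)
  also have "\<dots> = (\<Sum>i<2^n. \<Sum>j<2^n. A j i * ((2/3)^n * (\<Sum>u\<in>Uset. psi u i * cnj (psi u j))))"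
    by (intro sum.cong refl) (simp add: S3)
  also have "\<dots> = (2/3)^n * (\<Sum>u\<in>Uset. \<Sum>j<2^n. cnj (psi u j) * (\<Sum>i<2^n. A j i * psi u i))"
    by (rule aux2)
  finally show ?thesis by (simp add: power_divide)
qed

lemma psi_norm: "u \<in> Uset \<Longrightarrow> vnorm (2^n) (psi u) = 1"
proof -
  assume u: "u \<in> Uset"
  have "(\<Sum>i<2^n. (cmod (psi u i))\<^sup>2) = (\<Sum>i<2^n. \<Prod>k<n. (cmod (vv (u k) (Yv k (u k)) (bitk n k i)))\<^sup>2)"
    unfolding psi_def by (simp add: prod_norm[symmetric] prod_power_distrib)
  also have "\<dots> = (\<Prod>k<n. (cmod (vv (u k) (Yv k (u k)) 0))\<^sup>2 + (cmod (vv (u k) (Yv k (u k)) 1))\<^sup>2)"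
    by (rule sum_bits_prod)
  also have "\<dots> = 1"
  proof (rule prod.neutral, intro ballI)
    fix k assume k: "k \<in> {..<n}"
    then have "1 \<le> u k \<and> u k \<le> 3" using u unfolding Uset_def by (auto simp: PiE_iff)
    then have "u k \<in> {1,2,3}" by auto
    then show "(cmod (vv (u k) (Yv k (u k)) 0))\<^sup>2 + (cmod (vv (u k) (Yv k (u k)) 1))\<^sup>2 = 1"
      using Yv_pm k by (intro vv_norm) auto
  qed
  finally show ?thesis unfolding vnorm_def by simp
qed

lemma core_bound: "cmod (glift n A x) \<le> opnorm n A"
proof -
  have cU: "card Uset = 3^n" unfolding Uset_def by (simp add: card_PiE)
  have "cmod (glift n A x) = cmod (\<Sum>u\<in>Uset. \<Sum>j<2^n. cnj (psi u j) * (\<Sum>i<2^n. A j i * psi u i)) / 3^n"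
    by (simp add: core_identity norm_divide norm_power)
  also have "\<dots> \<le> (\<Sum>u\<in>Uset. opnorm n A) / 3^n"
    by (intro divide_right_mono order_trans[OF norm_sum] sum_mono quad_bound psi_norm) auto
  also have "\<dots> = opnorm n A" using cU by simp
  finally show ?thesis .
qed

end

lemma supnorm_glift: "supnorm (3*n) (glift n A) \<le> opnorm n A"
  unfolding supnorm_def using core_bound by (subst Max_le_iff) auto



lemma diag_class: "f \<in> classical_class n K \<Longrightarrow> diagm n f \<in> quantum_class n K"
  by (cases K) (auto intro: diag_hom diag_deg)

lemma glift_class: "A \<in> quantum_class n K \<Longrightarrow> glift n A \<in> classical_class (3*n) K"
  by (cases K) (auto intro: glift_hom glift_deg)

lemma has_qBr_the: "has_qBr n A \<Longrightarrow> qBr n A > 0 \<and> qbr_sum n A (qBr n A) = opnorm n A"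
  unfolding has_qBr_def qBr_def by (rule theI')

lemma has_Br_the: "has_Br m f \<Longrightarrow> Br m f > 0"
  unfolding has_Br_def Br_def by (rule conjunct1[OF theI'])

lemma qnz:
  assumes h: "has_qBr n A"
  shows "\<exists>s\<in>pauli_idx n. weight n s > 0 \<and> pauli_coeff n A s \<noteq> 0"
proof (rule ccontr)
  assume "\<not> ?thesis"
  then have z: "\<And>s. s \<in> pauli_idx n \<Longrightarrow> weight n s > 0 \<Longrightarrow> pauli_coeff n A s = 0" by auto
  have const: "qbr_sum n A r = qbr_sum n A 1" for r
    unfolding qbr_sum_def by (intro sum.cong refl) (use z in fastforce)
  from h obtain r where r: "r > 0" "qbr_sum n A r = opnorm n A"
    and u: "\<And>r'. r' > 0 \<and> qbr_sum n A r' = opnorm n A \<Longrightarrow> r' = r"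
    unfolding has_qBr_def by blast
  have "r + 1 = r" using u[of "r+1"] r const[of "r+1"] const[of r] by auto
  then show False by simp
qed

lemma part2_elem:
  assumes h: "has_qBr n A"
  shows "has_Br (3*n) (glift n A) \<and> Br (3*n) (glift n A) \<le> 3 * qBr n A"
proof -
  obtain s0 where s0: "s0 \<in> pauli_idx n" "weight n s0 > 0" "pauli_coeff n A s0 \<noteq> 0"
    using qnz[OF h] by blast
  have q: "qBr n A > 0" "qbr_sum n A (qBr n A) = opnorm n A" using has_qBr_the[OF h] by auto
  show ?thesis
  proof (rule br_key)
    show "liftS n s0 \<subseteq> {..<3*n}" using liftS_sub[OF s0(1)] .
    show "liftS n s0 \<noteq> {}" using card_liftS[OF s0(1)] s0(2) by auto
    show "fourier (3*n) (glift n A) (liftS n s0) \<noteq> 0" using fourier_glift_in[OF s0(1)] s0(3) by simp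
    show "3 * qBr n A > 0" using q by simp
    have "br_sum (3*n) (glift n A) (3 * qBr n A) = opnorm n A" using q br_sum_glift by simp
    then show "supnorm (3*n) (glift n A) \<le> br_sum (3*n) (glift n A) (3 * qBr n A)"
      using supnorm_glift by simp
  qed
qed

lemma fourier_chi: "S \<subseteq> {..<m} \<Longrightarrow> T \<subseteq> {..<m} \<Longrightarrow> fourier m (chi T) S = (if S = T then 1 else 0)"
  unfolding fourier_def by (simp add: chi_orth)

lemma chi_bound: "x \<in> cube m \<Longrightarrow> T \<subseteq> {..<m} \<Longrightarrow> cmod (chi T x) \<le> 1"
proof -
  assume x: "x \<in> cube m" and T: "T \<subseteq> {..<m}"
  have "\<bar>\<Prod>j\<in>T. x j\<bar> = (\<Prod>j\<in>T. \<bar>x j\<bar>)" by (rule abs_prod)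
  also have "\<dots> = 1" using cube_val[OF x] T by (intro prod.neutral) fastforce
  finally show ?thesis unfolding chi_def by (simp flip: of_real_prod)
qed

lemma chi_example:
  assumes "1 \<le> d" "d \<le> n"
  shows "has_Br n (chi {..<d})" "K \<in> {All, Hom, HomEq d, DegLe d} \<Longrightarrow> chi {..<d} \<in> classical_class n K"
proof -
  have T: "{..<d} \<subseteq> {..<n}" using assms by auto
  have bs: "br_sum n (chi {..<d}) 1 = 1"
  proof -
    have "br_sum n (chi {..<d}) 1 = (\<Sum>S\<in>Pow {..<n}. if S = {..<d} then 1 else 0)"
      unfolding br_sum_def using T by (intro sum.cong refl) (auto simp: fourier_chi)
    also have "\<dots> = 1" using T by simp
    finally show ?thesis .
  qed
  have "supnorm n (chi {..<d}) \<le> 1"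
    unfolding supnorm_def using chi_bound[OF _ T] by (subst Max_le_iff) auto
  then show "has_Br n (chi {..<d})"
  proof -
    have "0 \<in> {..<d}" using assms by auto
    then have "{..<d} \<noteq> {}" by blast
    then show ?thesis using br_key[of "{..<d}" n "chi {..<d}" 1] T bs \<open>supnorm n (chi {..<d}) \<le> 1\<close>
      by (auto simp: fourier_chi)
  qed
  have hom: "hom_eq n d (chi {..<d})" unfolding hom_eq_def using T by (auto simp: fourier_chi)
  have deg: "deg_le n d (chi {..<d})" unfolding deg_le_def using T by (auto simp: fourier_chi)
  show "K \<in> {All, Hom, HomEq d, DegLe d} \<Longrightarrow> chi {..<d} \<in> classical_class n K"
    using hom deg by auto
qed

theorem theorem4p4:
  fixes n d :: nat
  assumes "1 \<le> d" and "d \<le> n"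
  shows "\<forall>K \<in> {All, Hom, HomEq d, DegLe d}.
           qBr_class n (quantum_class n K) \<le> Br_class n (classical_class n K) \<and>
           Br_class (3 * n) (classical_class (3 * n) K) \<le> 3 * qBr_class n (quantum_class n K)"
proof
  fix K assume K: "K \<in> {All, Hom, HomEq d, DegLe d}"
  define C where "C m = {f \<in> classical_class m K. has_Br m f}" for m
  define Q where "Q = {A \<in> quantum_class n K. has_qBr n A}"
  have f0: "chi {..<d} \<in> C n" using chi_example[OF assms] K unfolding C_def by auto
  have A0: "diagm n (chi {..<d}) \<in> Q" using f0 unfolding C_def Q_def by (auto intro: diag_class simp: diag_has)
  have bddQ: "bdd_below (qBr n ` Q)" by (rule bdd_belowI[of _ 0]) (auto simp: Q_def dest: has_qBr_the)
  have bddC: "bdd_below (Br m ` C m)" for m by (rule bdd_belowI[of _ 0]) (auto simp: C_def dest!: has_Br_the)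
  have sub: "Br n ` C n \<subseteq> qBr n ` Q"
  proof
    fix r assume "r \<in> Br n ` C n"
    then obtain f where f: "f \<in> C n" "r = Br n f" by auto
    then have "diagm n f \<in> Q" "qBr n (diagm n f) = r" unfolding C_def Q_def
      by (auto intro: diag_class simp: diag_has diag_qBr)
    then show "r \<in> qBr n ` Q" by force
  qed
  have 1: "qBr_class n (quantum_class n K) \<le> Br_class n (classical_class n K)"
    unfolding qBr_class_def Br_class_def C_def[symmetric] Q_def[symmetric]
    by (rule cInf_superset_mono[OF _ bddQ sub]) (use f0 in auto)
  have each: "Inf (Br (3*n) ` C (3*n)) / 3 \<le> qBr n A" if A: "A \<in> Q" for A
  proof -
    have g: "glift n A \<in> C (3*n)" "Br (3*n) (glift n A) \<le> 3 * qBr n A"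
      using A part2_elem[of n A] glift_class[of A n K] unfolding C_def Q_def by auto
    have "Inf (Br (3*n) ` C (3*n)) \<le> Br (3*n) (glift n A)"
      by (rule cInf_lower[OF _ bddC]) (use g in auto)
    then show ?thesis using g by simp
  qed
  have "Inf (Br (3*n) ` C (3*n)) / 3 \<le> Inf (qBr n ` Q)"
    by (rule cInf_greatest) (use A0 each in auto)
  then have 2: "Br_class (3 * n) (classical_class (3 * n) K) \<le> 3 * qBr_class n (quantum_class n K)"
    unfolding qBr_class_def Br_class_def C_def[symmetric] Q_def[symmetric] by simp
  show "qBr_class n (quantum_class n K) \<le> Br_class n (classical_class n K) \<and>
           Br_class (3 * n) (classical_class (3 * n) K) \<le> 3 * qBr_class n (quantum_class n K)"
    using 1 2 by simp
qed

end
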